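(* Let $s\in\mathbb{N}$, $0<\alpha\le 1$, $1\le p\le\infty$, and let $f\in K_{\alpha,p}$. Then for every $L\in\mathbb{N}$, $$\Big|\sum_{\boldsymbol{k}\in\mathbb{Z}^s\setminus\{\boldsymbol{0}\}}\widetilde f(L\boldsymbol{k})\Big|\le \frac{s^{\alpha/p}}{L^\alpha}\,|f|_{H_{\alpha,p}}.$$
   Context: Convention: $s^{\alpha/p}=1$ when $p=\infty$. For $\boldsymbol{k},\boldsymbol{x}\in\mathbb{R}^s$, $\boldsymbol{k}\cdot\boldsymbol{x}=\sum_{j=1}^s k_jx_j$. For $f\in L^2([0,1]^s)$ the Fourier coefficients are $\widetilde f(\boldsymbol{k})=\int_{[0,1]^s}f(\boldsymbol{x})e^{-2\pi i\boldsymbol{k}\cdot\boldsymbol{x}}\,d\boldsymbol{x}$, $\boldsymbol{k}\in\mathbb{Z}^s$. For $0<\alpha\le1$, $1\le p\le\infty$, the Hölder seminorm is $|f|_{H_{\alpha,p}}=\sup\{|f(\boldsymbol{x}+\boldsymbol{h})-f(\boldsymbol{x})|/\|\boldsymbol{h}\|_{\ell^p}^\alpha:\ \boldsymbol{h}\neq\boldsymbol{0},\ \boldsymbol{x},\boldsymbol{x}+\boldsymbol{h}\in[0,1)^s\}$. A function $f:[0,1]^s\to\mathbb{R}$ is one-periodic if $f(\boldsymbol{x}_u,\boldsymbol{0})=f(\boldsymbol{x}_u,\boldsymbol{1})$ for all $u\subseteq\{1,\dots,s\}$ and $\boldsymbol{x}_u\in[0,1]^u$, where $(\boldsymbol{x}_u,\boldsymbol{0})$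 (resp. $(\boldsymbol{x}_u,\boldsymbol{1})$) has $j$th coordinate $x_j$ for $j\in u$ and $0$ (resp. $1$) otherwise. The space $K_{\alpha,p}$ consists of all one-periodic $f\in L^2([0,1]^s)$, $f:[0,1]^s\to\mathbb{R}$, with finite norm $\|f\|_{K_{\alpha,p}}=\sum_{\boldsymbol{k}\in\mathbb{Z}^s}|\widetilde f(\boldsymbol{k})|+|f|_{H_{\alpha,p}}$. *)

theory Defs
  imports "HOL-Analysis.Analysis" "HOL-Library.Extended_Real"
begin

text \<open>Points of [0,1]^s are vectors of type real^'s; the dimension s is CARD('s).
  The exponent p ranges over [1,\<infinity>] and is modelled as an extended real.\<close>

definition kdot :: "int ^ 's \<Rightarrow> real ^ 's \<Rightarrow> real" where
  "kdot k x = (\<Sum>j\<in>UNIV. of_int (k $ j) * x $ j)"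

definition fourier_coeff :: "(real ^ 's \<Rightarrow> real) \<Rightarrow> int ^ 's \<Rightarrow> complex" where
  "fourier_coeff f k = integral (cbox 0 1)
     (\<lambda>x. complex_of_real (f x) * exp (- (2 * of_real pi * \<i> * complex_of_real (kdot k x))))"

definition lp_norm :: "ereal \<Rightarrow> real ^ 's \<Rightarrow> real" where
  "lp_norm p h = (if p = \<infinity> then Max (range (\<lambda>j. \<bar>h $ j\<bar>))
                  else (\<Sum>j\<in>UNIV. \<bar>h $ j\<bar> powr real_of_ereal p) powr (1 / real_of_ereal p))"

definition halfopen_cube :: "(real ^ 's) set" where
  "halfopen_cube = {x. \<forall>j. 0 \<le> x $ j \<and> x $ j < 1}"

definition holder_quotients :: "real \<Rightarrow> ereal \<Rightarrow> (real ^ 's \<Rightarrow> real) \<Rightarrow> real set" where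
  "holder_quotients \<alpha> p f =
     {\<bar>f (x + h) - f x\<bar> / (lp_norm p h) powr \<alpha> | x h.
        h \<noteq> 0 \<and> x \<in> halfopen_cube \<and> x + h \<in> halfopen_cube}"

definition holder_seminorm :: "real \<Rightarrow> ereal \<Rightarrow> (real ^ 's \<Rightarrow> real) \<Rightarrow> real" where
  "holder_seminorm \<alpha> p f = Sup (holder_quotients \<alpha> p f)"

definition one_periodic :: "(real ^ 's \<Rightarrow> real) \<Rightarrow> bool" where
  "one_periodic f \<longleftrightarrow>
     (\<forall>u x. x \<in> cbox 0 1 \<longrightarrow>
        f (\<chi> j. if j \<in> u then x $ j else 0) = f (\<chi> j. if j \<in> u then x $ j else 1))"

definition square_integrable_on_cube :: "(real ^ 's \<Rightarrow> real) \<Rightarrow> bool" where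
  "square_integrable_on_cube f \<longleftrightarrow>
     f measurable_on cbox 0 1 \<and> (\<lambda>x. (f x)\<^sup>2) integrable_on cbox 0 1"

definition K_space :: "real \<Rightarrow> ereal \<Rightarrow> (real ^ 's \<Rightarrow> real) set" where
  "K_space \<alpha> p = {f. one_periodic f \<and> square_integrable_on_cube f
      \<and> (\<lambda>k. norm (fourier_coeff f k)) summable_on UNIV
      \<and> bdd_above (holder_quotients \<alpha> p f)}"

definition dim_factor :: "real \<Rightarrow> ereal \<Rightarrow> 's itself \<Rightarrow> real" where
  "dim_factor \<alpha> p _ = (if p = \<infinity> then 1 else real CARD('s) powr (\<alpha> / real_of_ereal p))"

end

theory Submission
  imports Defs
begin

definition grid :: "nat \<Rightarrow> ('s::finite \<Rightarrow> nat) set" where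
  "grid N = PiE UNIV (\<lambda>_. {..<N})"
definition gpt :: "nat \<Rightarrow> ('s::finite \<Rightarrow> nat) \<Rightarrow> real^'s" where
  "gpt N a = (\<chi> j. real (a j) / real N)"
definition gdel :: "nat \<Rightarrow> real^'s::finite" where
  "gdel N = (\<chi> j. 1 / real N)"

lemma finite_grid: "finite (grid N)"
  unfolding grid_def by (intro finite_PiE) auto

lemma grid_iff: "a \<in> grid N \<longleftrightarrow> (\<forall>j. a j < N)"
  unfolding grid_def by (auto simp: PiE_iff)

lemma inj_gpt: assumes "N \<ge> 1" shows "inj (gpt N :: ('s::finite \<Rightarrow> nat) \<Rightarrow> real^'s)"
proof
  fix a b :: "'s \<Rightarrow> nat" assume "gpt N a = gpt N b"
  then have "\<forall>j. real (a j) / real N = real (b j) / real N"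
    by (auto simp: gpt_def vec_eq_iff)
  with assms show "a = b" by (auto simp: fun_eq_iff)
qed

lemma grid_division:
  assumes N: "N \<ge> 1"
  shows "(\<lambda>a. cbox (gpt N a) (gpt N a + gdel N)) ` grid N division_of cbox (0::real^'s::finite) 1"
proof -
  have sub: "cbox (gpt N a) (gpt N a + gdel N) \<subseteq> cbox 0 1" if a: "a \<in> grid N" for a
  proof
    have aj: "a j + 1 \<le> N" for j using a by (auto simp: grid_iff Suc_le_eq)
    have le1: "(real (a j) + 1) / real N \<le> 1" for j
      using aj[of j] N by (simp add: divide_le_eq_1)
    fix x assume "x \<in> cbox (gpt N a) (gpt N a + gdel N)"
    then have "\<forall>j. real (a j) / N \<le> x $ j \<and> x $ j \<le> (real (a j) + 1) / N"
      by (auto simp: mem_box_cart gpt_def gdel_def add_divide_distrib)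
    then show "x \<in> cbox 0 1"
      using le1 by (auto simp: mem_box_cart intro: order_trans[rotated])
  qed
  show ?thesis
proof (rule division_ofI)
  show "finite ((\<lambda>a. cbox (gpt N a) (gpt N a + gdel N)) ` grid N)"
    using finite_grid by blast
next
  fix K assume "K \<in> (\<lambda>a. cbox (gpt N a) (gpt N a + gdel N)) ` grid N"
  then obtain a where a: "a \<in> grid N" and K: "K = cbox (gpt N a) (gpt N a + gdel N)" by blast
  have aj: "a j + 1 \<le> N" for j using a by (auto simp: grid_iff Suc_le_eq)
  have le1: "(real (a j) + 1) / real N \<le> 1" for j
    using aj[of j] N by (simp add: divide_le_eq_1)
  show "K \<subseteq> cbox 0 1"
    unfolding K using sub a by blast
  have "gpt N a \<in> K" unfolding K using N
    by (auto simp: gdel_def gpt_def mem_box_cart)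
  then show "K \<noteq> {}" by blast
  show "\<exists>a b. K = cbox a b" using K by blast
next
  fix K1 K2
  assume "K1 \<in> (\<lambda>a. cbox (gpt N a) (gpt N a + gdel N)) ` grid N"
     and "K2 \<in> (\<lambda>a. cbox (gpt N a) (gpt N a + gdel N)) ` grid N" and ne: "K1 \<noteq> K2"
  then obtain a b where K1: "K1 = cbox (gpt N a) (gpt N a + gdel N)"
    and K2: "K2 = cbox (gpt N b) (gpt N b + gdel N)" by blast
  with ne have "a \<noteq> b" by auto
  then obtain j where j: "a j \<noteq> b j" by auto
  show "interior K1 \<inter> interior K2 = {}"
  proof (rule ccontr)
    assume "interior K1 \<inter> interior K2 \<noteq> {}"
    then obtain x where "x \<in> box (gpt N a) (gpt N a + gdel N)" "x \<in> box (gpt N b) (gpt N b + gdel N)"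
      unfolding K1 K2 by auto
    then have h: "real (a j) / N < x $ j" "x $ j < (real (a j) + 1) / N"
      "real (b j) / N < x $ j" "x $ j < (real (b j) + 1) / N"
      by (auto simp: mem_box_cart gpt_def gdel_def add_divide_distrib)
    have Np: "real N > 0" using N by simp
    have "real (a j) / N < (real (b j) + 1) / N" "real (b j) / N < (real (a j) + 1) / N"
      using h by linarith+
    then have "real (a j) < real (b j) + 1" "real (b j) < real (a j) + 1"
      using Np by (simp_all add: divide_less_cancel)
    then show False using j by linarith
  qed
next
  show "\<Union> ((\<lambda>a. cbox (gpt N a) (gpt N a + gdel N)) ` grid N) = cbox (0::real^'s) 1"
  proof
    show "\<Union> ((\<lambda>a. cbox (gpt N a) (gpt N a + gdel N)) ` grid N) \<subseteq> cbox (0::real^'s) 1"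
      using sub by blast
  next
    show "cbox (0::real^'s) 1 \<subseteq> \<Union> ((\<lambda>a. cbox (gpt N a) (gpt N a + gdel N)) ` grid N)"
    proof
      fix x :: "real^'s" assume x: "x \<in> cbox 0 1"
      define a where "a = (\<lambda>j. min (N - 1) (nat \<lfloor>real N * x $ j\<rfloor>))"
      have "a \<in> grid N" using N by (auto simp: a_def grid_iff)
      moreover have "x \<in> cbox (gpt N a) (gpt N a + gdel N)"
        unfolding mem_box_cart
      proof
        fix j
        have x01: "0 \<le> x $ j" "x $ j \<le> 1" using x by (auto simp: mem_box_cart)
        have Npos: "real N > 0" using N by simp
        show "(gpt N a) $ j \<le> x $ j \<and> x $ j \<le> (gpt N a + gdel N) $ j"
        proof (cases "nat \<lfloor>real N * x $ j\<rfloor> \<le> N - 1")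
          case True
          then have aj: "real (a j) = of_int \<lfloor>real N * x $ j\<rfloor>"
            using x01 by (simp add: a_def min_def)
          have "of_int \<lfloor>real N * x $ j\<rfloor> \<le> real N * x $ j"
               "real N * x $ j < of_int \<lfloor>real N * x $ j\<rfloor> + 1" by linarith+
          then show ?thesis using Npos
            by (auto simp: gpt_def gdel_def aj field_simps)
        next
          case False
          then have "real N * x $ j \<ge> real N" by linarith
          then have "x $ j = 1" using x01 Npos by (smt (verit) mult_le_cancel_left1)
          moreover have "a j = N - 1" using False by (simp add: a_def)
          ultimately show ?thesis using Npos N
            by (auto simp: gpt_def gdel_def field_simps of_nat_diff)
        qed
      qed
      ultimately show "x \<in> \<Union> ((\<lambda>a. cbox (gpt N a) (gpt N a + gdel N)) ` grid N)" by blast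
    qed
  qed
qed
qed
lemma gpt_in_cell: "N \<ge> 1 \<Longrightarrow> gpt N a \<in> cbox (gpt N a) (gpt N a + gdel N)"
  by (auto simp: gdel_def gpt_def mem_box_cart)

lemma inj_cells: assumes N: "N \<ge> 1"
  shows "inj_on (\<lambda>a. cbox (gpt N a) (gpt N a + gdel N)) (grid N :: ('s::finite \<Rightarrow> nat) set)"
proof (rule inj_onI)
  fix a b :: "'s \<Rightarrow> nat"
  assume "cbox (gpt N a) (gpt N a + gdel N) = cbox (gpt N b) (gpt N b + gdel N)"
  then have "gpt N a = gpt N b"
    using gpt_in_cell[OF N, of a] by (auto simp: eq_cbox)
  then show "a = b" using inj_gpt[OF N] by (auto dest: injD)
qed

lemma fold_integrable:
  fixes g :: "real^'s::finite \<Rightarrow> 'b::banach"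
  assumes N: "N \<ge> 1" and g: "g integrable_on cbox 0 1" and a: "a \<in> grid N"
  shows "(\<lambda>y. g (gpt N a + y)) integrable_on cbox 0 (gdel N)"
proof -
  have "g integrable_on cbox (gpt N a) (gpt N a + gdel N)"
  proof (rule integrable_on_subcbox[OF g])
    show "cbox (gpt N a) (gpt N a + gdel N) \<subseteq> cbox 0 1"
      using division_ofD(2)[OF grid_division[OF N]] a by blast
  qed
  then show ?thesis
    using integrable_on_shift_cbox[of g "gpt N a" 0 "gdel N"] by (simp add: o_def add.commute)
qed

lemma fold_integral:
  fixes g :: "real^'s::finite \<Rightarrow> 'b::banach"
  assumes N: "N \<ge> 1" and g: "g integrable_on cbox 0 1"
  shows "integral (cbox 0 1) g = (\<Sum>a\<in>grid N. integral (cbox 0 (gdel N)) (\<lambda>y. g (gpt N a + y)))"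
proof -
  have "integral (cbox 0 1) g = (\<Sum>K\<in>(\<lambda>a. cbox (gpt N a) (gpt N a + gdel N)) ` grid N. integral K g)"
    by (rule integral_combine_division_topdown[OF g grid_division[OF N]])
  also have "\<dots> = (\<Sum>a\<in>grid N. integral (cbox (gpt N a) (gpt N a + gdel N)) g)"
    by (subst sum.reindex[OF inj_cells[OF N]]) simp
  also have "\<dots> = (\<Sum>a\<in>grid N. integral (cbox 0 (gdel N)) (\<lambda>y. g (gpt N a + y)))"
  proof (rule sum.cong[OF refl])
    fix a :: "'s \<Rightarrow> nat" assume a: "a \<in> grid N"
    have "((\<lambda>y. g (gpt N a + y)) has_integral integral (cbox 0 (gdel N)) (\<lambda>y. g (gpt N a + y))) (cbox 0 (gdel N))"
      using fold_integrable[OF N g a] by blast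
    then have "(g has_integral integral (cbox 0 (gdel N)) (\<lambda>y. g (gpt N a + y))) (cbox (gpt N a) (gpt N a + gdel N))"
      using has_integral_shift_cbox_iff[of g "gpt N a" _ 0 "gdel N"] by (simp add: o_def add.commute)
    then show "integral (cbox (gpt N a) (gpt N a + gdel N)) g = integral (cbox 0 (gdel N)) (\<lambda>y. g (gpt N a + y))"
      by (rule integral_unique)
  qed
  finally show ?thesis .
qed

definition E :: "int^'s::finite \<Rightarrow> real^'s \<Rightarrow> complex" where
  "E k x = exp (2 * of_real pi * \<i> * complex_of_real (kdot k x))"

lemma kdot_add_left: "kdot (a + b) x = kdot a x + kdot b x"
  by (simp add: kdot_def distrib_right sum.distrib)
lemma kdot_minus_left: "kdot (- a) x = - kdot a x"
  by (simp add: kdot_def sum_negf)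
lemma kdot_diff_left: "kdot (a - b) x = kdot a x - kdot b x"
  by (simp add: kdot_def left_diff_distrib sum_subtractf)
lemma kdot_add_right: "kdot k (x + y) = kdot k x + kdot k y"
  by (simp add: kdot_def distrib_left sum.distrib)
lemma kdot_zero_left[simp]: "kdot 0 x = 0"
  by (simp add: kdot_def)

lemma E_add_right: "E k (x + y) = E k x * E k y"
  by (simp add: E_def kdot_add_right distrib_left exp_add)
lemma E_add_left: "E (a + b) x = E a x * E b x"
  by (simp add: E_def kdot_add_left distrib_left exp_add)
lemma E_diff_left: "E (a - b) x = E a x * cnj (E b x)"
  by (simp add: E_def kdot_diff_left exp_cnj right_diff_distrib exp_diff exp_minus field_simps)
lemma E_zero[simp]: "E 0 x = 1"
  by (simp add: E_def)
lemma norm_E[simp]: "norm (E k x) = 1"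
proof -
  have "E k x = exp (\<i> * complex_of_real (2 * pi * kdot k x))" by (simp add: E_def mult_ac)
  then show ?thesis by (simp only: norm_exp_i_times)
qed
lemma E_int: "kdot k x = of_int n \<Longrightarrow> E k x = 1"
proof -
  assume "kdot k x = of_int n"
  then have "E k x = exp (\<i> * (of_int n * (of_real pi * 2)))" by (simp add: E_def mult_ac)
  then show ?thesis by simp
qed
lemma continuous_on_E: "continuous_on S (E k)"
  unfolding E_def kdot_def by (intro continuous_intros)
lemma fourier_coeff_E: "fourier_coeff f k = integral (cbox 0 1) (\<lambda>x. complex_of_real (f x) * E (- k) x)"
  by (simp add: fourier_coeff_def E_def kdot_minus_left)

lemma kdot_upd:
  assumes "\<And>i. i \<noteq> j \<Longrightarrow> x' $ i = x $ i"
  shows "kdot d x' = kdot d x + of_int (d $ j) * (x' $ j - x $ j)"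
proof -
  have "kdot d x' - kdot d x = (\<Sum>i\<in>UNIV. of_int (d $ i) * (x' $ i - x $ i))"
    by (simp add: kdot_def right_diff_distrib sum_subtractf)
  also have "\<dots> = (\<Sum>i\<in>UNIV. if i = j then of_int (d $ j) * (x' $ j - x $ j) else 0)"
    by (rule sum.cong) (auto simp: assms)
  finally show ?thesis by simp
qed

lemma integral_E:
  "integral (cbox 0 1) (E d) = (if d = 0 then 1 else 0)"
proof (cases "d = 0")
  case True
  have "integral (cbox (0::real^'a) 1) (\<lambda>x. 1::complex) = 1"
    by (simp add: content_cbox_if_cart interval_eq_empty_cart)
  moreover have "E 0 = (\<lambda>x::real^'a. 1)" by (simp add: fun_eq_iff)
  ultimately show ?thesis using True by metis
next
  case False
  then obtain j where j: "d $ j \<noteq> 0" by (auto simp: vec_eq_iff)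
  define N where "N = nat \<bar>d $ j\<bar> + 1"
  have N: "N \<ge> 1" by (simp add: N_def)
  have Npos: "real N > 0" using N by simp
  define \<zeta> where "\<zeta> = exp (2 * of_real pi * \<i> * complex_of_real (of_int (d $ j) / real N))"
  define \<sigma> where "\<sigma> = (\<lambda>a::'a \<Rightarrow> nat. a(j := (a j + 1) mod N))"
  have sig_grid: "\<sigma> a \<in> grid N" if "a \<in> grid N" for a
    using that N by (auto simp: \<sigma>_def grid_iff)
  have inj: "inj_on \<sigma> (grid N)"
  proof (rule inj_onI)
    fix a b assume a: "a \<in> grid N" and b: "b \<in> grid N" and e: "\<sigma> a = \<sigma> b"
    then have "(a j + 1) mod N = (b j + 1) mod N" by (metis \<sigma>_def fun_upd_same)
    moreover have "a j < N" "b j < N" using a b by (auto simp: grid_iff)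
    moreover have m: "\<And>t. t < N \<Longrightarrow> (t + 1) mod N = (if t + 1 = N then 0 else t + 1)"
      by auto
    ultimately have "a j = b j"
      by (auto simp: m split: if_splits)
    with e show "a = b"
      by (auto simp: \<sigma>_def fun_eq_iff split: if_splits)
  qed
  have img: "\<sigma> ` grid N = grid N"
    by (rule endo_inj_surj[OF finite_grid _ inj]) (use sig_grid in blast)
  have shift: "E d (gpt N (\<sigma> a)) = E d (gpt N a) * \<zeta>" if a: "a \<in> grid N" for a
  proof -
    have aj: "a j < N" using a by (auto simp: grid_iff)
    have kd: "kdot d (gpt N (\<sigma> a)) = kdot d (gpt N a) + of_int (d $ j) * ((real ((a j + 1) mod N) - real (a j)) / real N)"
      by (subst kdot_upd[where j=j and x="gpt N a"]) (auto simp: gpt_def \<sigma>_def diff_divide_distrib)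
    show ?thesis
    proof (cases "a j + 1 < N")
      case True
      then have "kdot d (gpt N (\<sigma> a)) = kdot d (gpt N a) + of_int (d $ j) / real N"
        using kd by simp
      then show ?thesis
        by (simp add: E_def \<zeta>_def distrib_left exp_add)
    next
      case False
      then have "a j + 1 = N" using aj by simp
      then have "(a j + 1) mod N = 0" by simp
      moreover have "real (a j) = real N - 1" using \<open>a j + 1 = N\<close> by linarith
      ultimately have "(real ((a j + 1) mod N) - real (a j)) / real N = 1 / real N - 1"
        using Npos by (simp add: field_simps)
      then have "kdot d (gpt N (\<sigma> a)) = (kdot d (gpt N a) + of_int (d $ j) / real N) + of_int (- d $ j)"
        using kd by (simp add: right_diff_distrib)
      then have "E d (gpt N (\<sigma> a)) = exp (2 * of_real pi * \<i> * complex_of_real (kdot d (gpt N a) + of_int (d $ j) / real N)) * exp (\<i> * (of_int (- d $ j) * (of_real pi * 2)))"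
        unfolding E_def by (simp only: of_real_add distrib_left exp_add) (simp add: mult_ac)
      also have "\<dots> = E d (gpt N a) * \<zeta>"
        by (simp only: exp_2pi_1_int mult_1_right) (simp add: E_def \<zeta>_def distrib_left exp_add)
      finally show ?thesis .
    qed
  qed
  define S where "S = (\<Sum>a\<in>grid N. E d (gpt N a))"
  have "S = (\<Sum>a\<in>\<sigma> ` grid N. E d (gpt N a))" by (simp add: S_def img)
  also have "\<dots> = (\<Sum>a\<in>grid N. E d (gpt N (\<sigma> a)))"
    by (simp add: sum.reindex[OF inj])
  also have "\<dots> = S * \<zeta>"
    by (simp add: S_def shift sum_distrib_right)
  finally have S\<zeta>: "S = S * \<zeta>" .
  have "\<zeta> \<noteq> 1"
  proof
    assume "\<zeta> = 1"
    then obtain n :: int where n: "2 * pi * (of_int (d $ j) / real N) = of_int (2 * n) * pi"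
      unfolding \<zeta>_def exp_eq_1 by auto
    then have "(2 * pi) * (of_int (d $ j) / real N) = (2 * pi) * of_int n"
      by (simp add: algebra_simps)
    then have "of_int (d $ j) / real N = of_int n"
      by (simp only: mult_cancel_left) simp
    then have eq: "of_int (d $ j) = of_int n * real N" using Npos by (simp add: field_simps)
    have "\<bar>of_int (d $ j)\<bar> < real N"
      by (simp add: N_def)
    moreover have "\<bar>of_int (d $ j)\<bar> \<ge> real N" if "n \<noteq> 0"
    proof -
      have "\<bar>of_int (d $ j)\<bar> = \<bar>of_int n\<bar> * real N" using eq Npos by (simp add: abs_mult)
      moreover have "\<bar>(of_int n :: real)\<bar> \<ge> 1" using that by linarith
      ultimately show ?thesis using Npos by simp
    qed
    ultimately have "n = 0" by linarith
    with eq j show False by simp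
  qed
  with S\<zeta> have S0: "S = 0" by (metis mult_cancel_left1)
  have "integral (cbox 0 1) (E d) = (\<Sum>a\<in>grid N. integral (cbox 0 (gdel N)) (\<lambda>y. E d (gpt N a + y)))"
    by (rule fold_integral[OF N]) (simp add: continuous_on_E integrable_continuous)
  also have "\<dots> = (\<Sum>a\<in>grid N. E d (gpt N a) * integral (cbox 0 (gdel N)) (E d))"
    by (simp add: E_add_right)
  also have "\<dots> = S * integral (cbox 0 (gdel N)) (E d)"
    by (simp add: S_def sum_distrib_right)
  finally show ?thesis using S0 False by simp
qed

lemma geom_estimate:
  fixes f K :: "real^'s::finite \<Rightarrow> real"
  assumes L: "L \<ge> 1"
    and fi: "f integrable_on cbox 0 1" and fKi: "(\<lambda>x. f x * K x) integrable_on cbox 0 1"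
    and Kc: "continuous_on UNIV K" and Kpos: "\<And>x. K x \<ge> 0"
    and Kper: "\<And>a y. a \<in> grid L \<Longrightarrow> K (gpt L a + y) = K y"
    and hold: "\<And>a y z. a \<in> grid L \<Longrightarrow> y \<in> box 0 (gdel L) \<Longrightarrow> z \<in> box 0 (gdel L)
                 \<Longrightarrow> \<bar>f (gpt L a + y) - f (gpt L a + z)\<bar> \<le> C"
    and Kint: "integral (cbox 0 1) K = 1"
  shows "\<bar>integral (cbox 0 1) (\<lambda>x. f x * K x) - integral (cbox 0 1) f\<bar> \<le> C"
proof -
  define Q where "Q = cbox (0::real^'s) (gdel L)"
  define B where "B = box (0::real^'s) (gdel L)"
  define G where "G = (grid L :: ('s \<Rightarrow> nat) set)"
  define Nc where "Nc = real (card G)"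
  define \<mu> where "\<mu> = integral Q K"
  define vol where "vol = integral Q (\<lambda>y. 1::real)"
  define F where "F = (\<lambda>a y. f (gpt L a + y))"
  define M where "M = (\<lambda>a. Nc * integral Q (F a))"
  have Ki: "K integrable_on S" if "S = cbox a b" for S a b
    using that Kc by (simp add: integrable_continuous continuous_on_subset)
  have KiQ: "K integrable_on Q" using Ki Q_def by blast
  have KiB: "K integrable_on B" using KiQ by (simp add: B_def Q_def integrable_on_open_interval)
  have Fi: "F a integrable_on Q" if "a \<in> G" for a
    using fold_integrable[OF L fi] that by (simp add: F_def Q_def G_def)
  have FKi: "(\<lambda>y. F a y * K y) integrable_on Q" if "a \<in> G" for a
    using fold_integrable[OF L fKi, of a] that Kper by (simp add: F_def Q_def G_def)
  have "1 = integral (cbox 0 1) K" using Kint by simp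
  also have "\<dots> = (\<Sum>a\<in>G. integral Q (\<lambda>y. K (gpt L a + y)))"
    by (rule fold_integral[OF L Ki[OF refl], folded Q_def G_def])
  also have "\<dots> = Nc * \<mu>"
    by (simp add: Kper G_def Nc_def \<mu>_def)
  finally have Nmu: "Nc * \<mu> = 1" by simp
  have "1 = integral (cbox (0::real^'s) 1) (\<lambda>y. 1::real)"
    by (simp add: content_cbox_if_cart interval_eq_empty_cart)
  also have "\<dots> = (\<Sum>a\<in>G. integral Q (\<lambda>y. 1::real))"
    using fold_integral[OF L integrable_const[of "1::real"]] by (simp add: Q_def G_def)
  also have "\<dots> = Nc * vol" by (simp add: Nc_def vol_def)
  finally have Nvol: "Nc * vol = 1" by simp
  have Nc0: "Nc \<ge> 0" by (simp add: Nc_def)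
  have mu0: "\<mu> \<ge> 0" unfolding \<mu>_def using KiQ Kpos by (simp add: integral_nonneg)
  have volB: "integral B (\<lambda>y. 1::real) = vol"
    by (simp add: B_def Q_def vol_def integral_open_interval)
  have dev: "\<bar>F a y - M a\<bar> \<le> C" if a: "a \<in> G" and y: "y \<in> B" for a y
  proof -
    have "F a y - M a = Nc * (vol * F a y - integral Q (F a))"
      using Nvol by (simp add: M_def algebra_simps)
    also have "vol * F a y = integral Q (\<lambda>z. F a y)"
      unfolding vol_def Q_def by simp
    also have "integral Q (\<lambda>z. F a y) - integral Q (F a) = integral B (\<lambda>z. F a y - F a z)"
      using Fi[OF a] unfolding B_def Q_def integral_open_interval by (subst integral_diff) auto
    finally have eq: "F a y - M a = Nc * integral B (\<lambda>z. F a y - F a z)" .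
    have "\<bar>integral B (\<lambda>z. F a y - F a z)\<bar> \<le> integral B (\<lambda>z. C)"
    proof (rule integral_norm_bound_integral[where f="\<lambda>z. F a y - F a z", simplified real_norm_def])
      show "(\<lambda>z. F a y - F a z) integrable_on B"
        using Fi[OF a] unfolding B_def Q_def integrable_on_open_interval
        by (intro integrable_diff integrable_const) auto
      show "(\<lambda>z. C) integrable_on B" unfolding B_def integrable_on_open_interval by (rule integrable_const)
      show "\<bar>F a y - F a z\<bar> \<le> C" if "z \<in> B" for z
        using hold[of a y z] a y that by (simp add: F_def G_def B_def)
    qed
    also have "integral B (\<lambda>z. C) = C * vol"
      unfolding B_def vol_def Q_def integral_open_interval by simp
    finally have "\<bar>F a y - M a\<bar> \<le> Nc * (C * vol)"
      using Nc0 by (simp add: eq abs_mult mult_left_mono)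
    then show ?thesis using Nvol by (simp add: algebra_simps)
  qed
  have "integral (cbox 0 1) (\<lambda>x. f x * K x) = (\<Sum>a\<in>G. integral Q (\<lambda>y. F a y * K y))"
    using fold_integral[OF L fKi] Kper by (simp add: Q_def G_def F_def)
  moreover have "integral (cbox 0 1) f = (\<Sum>a\<in>G. M a * \<mu>)"
  proof -
    have "integral (cbox 0 1) f = (\<Sum>a\<in>G. integral Q (F a))"
      using fold_integral[OF L fi] by (simp add: Q_def G_def F_def)
    also have "\<dots> = (\<Sum>a\<in>G. M a * \<mu>)"
    proof (rule sum.cong[OF refl])
      fix a
      have "M a * \<mu> = integral Q (F a) * (Nc * \<mu>)" by (simp add: M_def mult_ac)
      then show "integral Q (F a) = M a * \<mu>" using Nmu by simp
    qed
    finally show ?thesis .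
  qed
  ultimately have e1: "integral (cbox 0 1) (\<lambda>x. f x * K x) - integral (cbox 0 1) f
      = (\<Sum>a\<in>G. integral B (\<lambda>y. (F a y - M a) * K y))"
  proof -
    have "integral Q (\<lambda>y. F a y * K y) - M a * \<mu> = integral B (\<lambda>y. (F a y - M a) * K y)" if a: "a \<in> G" for a
    proof -
      have "integral Q (\<lambda>y. F a y * K y) - M a * \<mu> = integral Q (\<lambda>y. F a y * K y) - integral Q (\<lambda>y. M a * K y)"
        by (simp add: \<mu>_def)
      also have "\<dots> = integral Q (\<lambda>y. F a y * K y - M a * K y)"
        using FKi[OF a] KiQ by (subst integral_diff) (auto intro: integrable_on_mult_right)
      finally show ?thesis
        by (simp add: B_def Q_def integral_open_interval left_diff_distrib)
    qed
    moreover assume "integral (cbox 0 1) (\<lambda>x. f x * K x) = (\<Sum>a\<in>G. integral Q (\<lambda>y. F a y * K y))"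
      "integral (cbox 0 1) f = (\<Sum>a\<in>G. M a * \<mu>)"
    ultimately show ?thesis by (simp add: sum_subtractf[symmetric])
  qed
  have e2: "\<bar>\<Sum>a\<in>G. integral B (\<lambda>y. (F a y - M a) * K y)\<bar> \<le> (\<Sum>a\<in>G. C * \<mu>)"
  proof (rule order_trans[OF sum_abs sum_mono])
    fix a assume a: "a \<in> G"
    have "\<bar>integral B (\<lambda>y. (F a y - M a) * K y)\<bar> \<le> integral B (\<lambda>y. C * K y)"
    proof (rule integral_norm_bound_integral[where f="\<lambda>y. (F a y - M a) * K y", simplified real_norm_def])
      show "(\<lambda>y. (F a y - M a) * K y) integrable_on B"
        using FKi[OF a] KiQ by (simp add: B_def Q_def integrable_on_open_interval left_diff_distrib
            integrable_diff integrable_on_mult_right)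
      show "(\<lambda>y. C * K y) integrable_on B" using KiB by (simp add: integrable_on_mult_right)
      show "\<bar>(F a y - M a) * K y\<bar> \<le> C * K y" if "y \<in> B" for y
        using dev[OF a that] Kpos[of y] by (simp add: abs_mult mult_right_mono)
    qed
    also have "\<dots> = C * \<mu>"
      by (simp add: \<mu>_def B_def Q_def integral_open_interval)
    finally show "\<bar>integral B (\<lambda>y. (F a y - M a) * K y)\<bar> \<le> C * \<mu>" .
  qed
  have "(\<Sum>a\<in>G. C * \<mu>) = C * (Nc * \<mu>)" by (simp add: Nc_def mult_ac)
  then have e3: "(\<Sum>a\<in>G. C * \<mu>) = C" using Nmu by simp
  have e2': "\<bar>\<Sum>a\<in>G. integral B (\<lambda>y. (F a y - M a) * K y)\<bar> \<le> C"
    using e2 e3 by linarith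
  show ?thesis by (simp only: e1) (rule e2')
qed

lemma f_abs_int:
  fixes f :: "real^'s::finite \<Rightarrow> real"
  assumes "square_integrable_on_cube f"
  shows "f absolutely_integrable_on cbox 0 1"
proof (rule measurable_bounded_by_integrable_imp_absolutely_integrable)
  show "f \<in> borel_measurable (lebesgue_on (cbox 0 1))"
    using assms by (simp add: square_integrable_on_cube_def measurable_on_iff_borel_measurable)
  show "cbox (0::real^'s) 1 \<in> sets lebesgue" by simp
  show "(\<lambda>x. 1 + (f x)\<^sup>2) integrable_on cbox 0 1"
    using assms by (intro integrable_add integrable_const) (simp_all add: square_integrable_on_cube_def)
  show "norm (f x) \<le> 1 + (f x)\<^sup>2" if "x \<in> cbox 0 1" for x
  proof -
    have "0 \<le> (\<bar>f x\<bar> - 1)^2" by simp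
    then have "2 * \<bar>f x\<bar> \<le> \<bar>f x\<bar>^2 + 1" by (simp add: power2_diff)
    moreover have "0 \<le> \<bar>f x\<bar>^2" by simp
    ultimately have "\<bar>f x\<bar> \<le> 1 + \<bar>f x\<bar>^2" by linarith
    then show ?thesis by simp
  qed
qed

lemma int_bounded_cont_product:
  fixes f :: "real^'s::finite \<Rightarrow> real" and \<phi> :: "real^'s \<Rightarrow> 'c::{euclidean_space,real_normed_algebra_1}"
  assumes f: "f absolutely_integrable_on cbox 0 1" and \<phi>: "continuous_on (cbox 0 1) \<phi>"
  shows "(\<lambda>x. \<phi> x * of_real (f x)) integrable_on cbox 0 1"
proof -
  have g: "(\<lambda>x. (of_real (f x) :: 'c)) absolutely_integrable_on cbox 0 1"
  proof -
    have "(\<lambda>x. f x *\<^sub>R (1::'c)) absolutely_integrable_on cbox 0 1"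
      using f by (rule absolutely_integrable_scaleR_right)
    then show ?thesis by (simp add: of_real_def)
  qed
  have "(\<lambda>x. \<phi> x * of_real (f x)) absolutely_integrable_on cbox 0 1"
  proof (rule absolutely_integrable_bounded_measurable_product[OF bilinear_times _ _ _ g])
    show "\<phi> \<in> borel_measurable (lebesgue_on (cbox 0 1))"
      using \<phi> by (simp add: continuous_imp_measurable_on_sets_lebesgue)
    show "cbox (0::real^'s) 1 \<in> sets lebesgue" by simp
    show "bounded (\<phi> ` cbox 0 1)"
      using \<phi> by (simp add: compact_continuous_image compact_imp_bounded)
  qed
  then show ?thesis using set_lebesgue_integral_eq_integral(1) by blast
qed

definition MM :: "nat \<Rightarrow> ('s::finite \<Rightarrow> int) set" where
  "MM n = PiE UNIV (\<lambda>_. {0..int n})"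
definition vL :: "nat \<Rightarrow> ('s::finite \<Rightarrow> int) \<Rightarrow> int^'s" where
  "vL L m = (\<chi> j. int L * m j)"
definition Kc :: "nat \<Rightarrow> nat \<Rightarrow> real^'s::finite \<Rightarrow> complex" where
  "Kc L n x = of_real (1 / real (card (MM n :: ('s \<Rightarrow> int) set))) *
     (\<Sum>m\<in>MM n. \<Sum>m'\<in>MM n. E (vL L m - vL L m') x)"
definition Kr :: "nat \<Rightarrow> nat \<Rightarrow> real^'s::finite \<Rightarrow> real" where
  "Kr L n x = (cmod (\<Sum>m\<in>MM n. E (vL L m) x))\<^sup>2 / real (card (MM n :: ('s \<Rightarrow> int) set))"

lemma finite_MM: "finite (MM n)"
  unfolding MM_def by (intro finite_PiE) auto
lemma MM_iff: "m \<in> MM n \<longleftrightarrow> (\<forall>j. 0 \<le> m j \<and> m j \<le> int n)"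
  unfolding MM_def by (auto simp: PiE_iff)
lemma card_MM_pos: "card (MM n) > 0"
proof -
  have "(\<lambda>_. 0) \<in> MM n" by (simp add: MM_iff)
  then show ?thesis using finite_MM by (auto simp: card_gt_0_iff)
qed

lemma Kr_Kc: "complex_of_real (Kr L n x) = Kc L n x"
proof -
  have "complex_of_real ((cmod (\<Sum>m\<in>MM n. E (vL L m) x))\<^sup>2)
        = (\<Sum>m\<in>MM n. E (vL L m) x) * cnj (\<Sum>m\<in>MM n. E (vL L m) x)"
    by (rule complex_norm_square)
  also have "\<dots> = (\<Sum>m\<in>MM n. \<Sum>m'\<in>MM n. E (vL L m - vL L m') x)"
    by (simp add: sum_product E_diff_left)
  finally show ?thesis
    unfolding Kr_def Kc_def by (simp add: divide_inverse mult.commute)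
qed

lemma Kr_nonneg: "Kr L n x \<ge> 0"
  by (simp add: Kr_def)

lemma Kr_cont: "continuous_on S (Kr L n)"
  unfolding Kr_def using card_MM_pos[of n] by (intro continuous_intros continuous_on_E) auto

lemma E_vL_gpt:
  assumes L: "L \<ge> 1"
  shows "E (vL L m) (gpt L a) = 1"
proof (rule E_int)
  have "kdot (vL L m) (gpt L a) = (\<Sum>j\<in>UNIV. of_int (m j * int (a j)))"
    using L by (simp add: kdot_def vL_def gpt_def)
  also have "\<dots> = of_int (\<Sum>j\<in>UNIV. m j * int (a j))" by simp
  finally show "kdot (vL L m) (gpt L a) = of_int (\<Sum>j\<in>UNIV. m j * int (a j))" .
qed

lemma Kr_per:
  assumes L: "L \<ge> 1"
  shows "Kr L n (gpt L a + y) = Kr L n y"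
  by (simp add: Kr_def E_add_right E_vL_gpt[OF L])

lemma vL_inj: assumes L: "L \<ge> 1" shows "vL L m = vL L m' \<longleftrightarrow> m = m'"
  using L by (auto simp: vL_def vec_eq_iff fun_eq_iff)

lemma Kr_int:
  assumes L: "L \<ge> 1"
  shows "integral (cbox 0 1) (Kr L n :: real^'s::finite \<Rightarrow> real) = 1"
proof -
  have ic: "(Kr L n :: real^'s \<Rightarrow> real) integrable_on cbox 0 1"
    by (intro integrable_continuous Kr_cont)
  have "complex_of_real (integral (cbox 0 1) (Kr L n :: real^'s \<Rightarrow> real))
        = integral (cbox 0 1) (\<lambda>x::real^'s. complex_of_real (Kr L n x))"
    using integral_linear[OF ic bounded_linear_of_real[where 'a=complex]] unfolding o_def by (rule sym)
  also have "\<dots> = integral (cbox 0 1) (Kc L n :: real^'s \<Rightarrow> complex)"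
    by (simp add: Kr_Kc)
  also have "\<dots> = of_real (1 / real (card (MM n :: ('s \<Rightarrow> int) set))) *
     (\<Sum>m\<in>(MM n :: ('s \<Rightarrow> int) set). \<Sum>m'\<in>MM n. integral (cbox 0 1) (E (vL L m - vL L m') :: real^'s \<Rightarrow> complex))"
    unfolding Kc_def
    by (simp add: integral_sum finite_MM integrable_continuous continuous_on_E integrable_sum)
  also have "\<dots> = of_real (1 / real (card (MM n :: ('s \<Rightarrow> int) set))) *
     (\<Sum>m\<in>(MM n :: ('s \<Rightarrow> int) set). \<Sum>m'\<in>MM n. if m = m' then 1 else 0)"
    by (simp add: integral_E vL_inj[OF L])
  also have "\<dots> = 1"
  proof -
    have cp: "card (MM n :: ('s \<Rightarrow> int) set) > 0" by (rule card_MM_pos)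
    have fm: "finite (MM n :: ('s \<Rightarrow> int) set)" by (rule finite_MM)
    show ?thesis using cp fm by (simp add: sum.delta sum.delta' card_gt_0_iff)
  qed
  finally show ?thesis by (metis of_real_eq_1_iff)
qed

lemma fE_int:
  fixes f :: "real^'s::finite \<Rightarrow> real"
  assumes fa: "f absolutely_integrable_on cbox 0 1"
  shows "(\<lambda>x. complex_of_real (f x) * E d x) integrable_on cbox 0 1"
  using int_bounded_cont_product[OF fa continuous_on_E[of _ d]] by (simp add: mult.commute)

lemma fK_int:
  fixes f :: "real^'s::finite \<Rightarrow> real"
  assumes fa: "f absolutely_integrable_on cbox 0 1"
  shows "(\<lambda>x. f x * Kr L n x) integrable_on cbox 0 1"
  using int_bounded_cont_product[OF fa Kr_cont[of _ L n]] by (simp add: mult.commute)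

lemma fK_identity:
  fixes f :: "real^'s::finite \<Rightarrow> real"
  assumes fa: "f absolutely_integrable_on cbox 0 1"
  shows "complex_of_real (integral (cbox 0 1) (\<lambda>x. f x * Kr L n x))
    = of_real (1 / real (card (MM n :: ('s \<Rightarrow> int) set))) *
      (\<Sum>m\<in>(MM n :: ('s \<Rightarrow> int) set). \<Sum>m'\<in>MM n. fourier_coeff f (vL L m' - vL L m))"
proof -
  have "complex_of_real (integral (cbox 0 1) (\<lambda>x. f x * Kr L n x))
        = integral (cbox 0 1) (\<lambda>x::real^'s. complex_of_real (f x * Kr L n x))"
    using integral_linear[OF fK_int[OF fa] bounded_linear_of_real[where 'a=complex]] unfolding o_def by (rule sym)
  also have "\<dots> = integral (cbox 0 1) (\<lambda>x::real^'s. of_real (1 / real (card (MM n :: ('s \<Rightarrow> int) set))) *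
      (\<Sum>m\<in>(MM n :: ('s \<Rightarrow> int) set). \<Sum>m'\<in>MM n. complex_of_real (f x) * E (vL L m - vL L m') x))"
    by (rule integral_cong) (simp add: Kr_Kc Kc_def sum_distrib_left mult_ac)
  also have "\<dots> = of_real (1 / real (card (MM n :: ('s \<Rightarrow> int) set))) *
      (\<Sum>m\<in>(MM n :: ('s \<Rightarrow> int) set). \<Sum>m'\<in>MM n. integral (cbox 0 1) (\<lambda>x::real^'s. complex_of_real (f x) * E (vL L m - vL L m') x))"
    by (simp add: integral_sum finite_MM integrable_sum fE_int[OF fa])
  also have "\<dots> = of_real (1 / real (card (MM n :: ('s \<Rightarrow> int) set))) *
      (\<Sum>m\<in>(MM n :: ('s \<Rightarrow> int) set). \<Sum>m'\<in>MM n. fourier_coeff f (vL L m' - vL L m))"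
    by (simp add: fourier_coeff_E)
  finally show ?thesis .
qed

definition madd :: "('s::finite \<Rightarrow> int) \<Rightarrow> int^'s \<Rightarrow> ('s \<Rightarrow> int)" where
  "madd m k = (\<lambda>j. m j + k $ j)"
definition vdiff :: "('s::finite \<Rightarrow> int) \<Rightarrow> ('s \<Rightarrow> int) \<Rightarrow> int^'s" where
  "vdiff m' m = (\<chi> j. m' j - m j)"
definition wt :: "nat \<Rightarrow> int^'s::finite \<Rightarrow> real" where
  "wt n k = real (card {m \<in> MM n. madd m k \<in> MM n}) / real (card (MM n :: ('s \<Rightarrow> int) set))"

lemma card_slice:
  "card {t \<in> {0..int n}. t + d \<in> {0..int n}} = nat (int n + 1 - \<bar>d\<bar>)"
proof -
  have "{t \<in> {0..int n}. t + d \<in> {0..int n}} = {max 0 (- d)..min (int n) (int n - d)}"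
    by auto
  moreover have "min (int n) (int n - d) - max 0 (- d) + 1 = int n + 1 - \<bar>d\<bar>"
    by (auto simp: min_def max_def abs_if)
  ultimately show ?thesis by simp
qed

lemma slice_PiE:
  "{m \<in> MM n. madd m k \<in> MM n} = PiE UNIV (\<lambda>j. {t \<in> {0..int n}. t + k $ j \<in> {0..int n}})"
  unfolding MM_def madd_def by (auto simp: PiE_iff)

lemma wt_formula:
  "wt n (k :: int^'s::finite) = (\<Prod>j\<in>UNIV. max 0 (1 - real_of_int \<bar>k $ j\<bar> / (real n + 1)))"
proof -
  have c1: "card {m \<in> MM n. madd m k \<in> MM n} = (\<Prod>j\<in>UNIV. nat (int n + 1 - \<bar>k $ j\<bar>))"
    unfolding slice_PiE by (simp only: card_PiE[OF finite_class.finite_UNIV] card_slice)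
  have c2: "card (MM n :: ('s \<Rightarrow> int) set) = (\<Prod>j\<in>(UNIV::'s set). nat (int n + 1))"
    unfolding MM_def by (simp add: card_PiE)
  have fac: "real (nat (int n + 1 - \<bar>d\<bar>)) / real (nat (int n + 1)) = max 0 (1 - real_of_int \<bar>d\<bar> / (real n + 1))" for d
  proof -
    have np: "real n + 1 > 0" by simp
    have "real (nat (int n + 1 - \<bar>d\<bar>)) = max 0 (real n + 1 - real_of_int \<bar>d\<bar>)"
      by (simp add: max_def)
    moreover have "real (nat (int n + 1)) = real n + 1" by simp
    moreover have "max 0 A / (real n + 1) = max 0 (A / (real n + 1))" for A :: real
    proof (cases "0 \<le> A")
      case True then show ?thesis using np by (simp add: max_def)
    next
      case False
      then have "A / (real n + 1) < 0" using np by (simp add: divide_neg_pos)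
      then show ?thesis using False by (simp add: max_def)
    qed
    moreover have "(real n + 1 - real_of_int \<bar>d\<bar>) / (real n + 1) = 1 - real_of_int \<bar>d\<bar> / (real n + 1)"
      using np by (simp add: diff_divide_distrib)
    ultimately show ?thesis by simp
  qed
  show ?thesis
    unfolding wt_def c1 c2 of_nat_prod prod_dividef[symmetric] fac by (rule refl)
qed

lemma wt_nonneg: "wt n k \<ge> 0"
  by (simp add: wt_formula prod_nonneg)

lemma wt_le1: "wt n k \<le> 1"
  unfolding wt_formula by (rule prod_le_1) auto

lemma wt_lim: "(\<lambda>n. wt n k) \<longlonglongrightarrow> 1"
proof -
  have "(\<lambda>n. \<Prod>j\<in>UNIV. max 0 (1 - real_of_int \<bar>k $ j\<bar> / (real n + 1))) \<longlonglongrightarrow> (\<Prod>j\<in>(UNIV::'a set). max 0 (1 - 0))"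
  proof (intro tendsto_prod tendsto_max tendsto_const tendsto_diff)
    fix j
    show "(\<lambda>n. real_of_int \<bar>k $ j\<bar> / (real n + 1)) \<longlonglongrightarrow> 0"
    proof -
      have "(\<lambda>n. real_of_int \<bar>k $ j\<bar> * inverse (real (Suc n))) \<longlonglongrightarrow> real_of_int \<bar>k $ j\<bar> * 0"
        by (intro tendsto_mult tendsto_const LIMSEQ_inverse_real_of_nat)
      then show ?thesis by (simp add: divide_inverse add.commute)
    qed
  qed
  then show ?thesis by (simp add: wt_formula)
qed

lemma double_sum_wt:
  fixes h :: "int^'s::finite \<Rightarrow> complex"
  shows "of_real (1 / real (card (MM n :: ('s \<Rightarrow> int) set))) *
           (\<Sum>m\<in>(MM n :: ('s \<Rightarrow> int) set). \<Sum>m'\<in>MM n. h (vdiff m' m))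
         = (\<Sum>\<^sub>\<infinity>k\<in>UNIV. of_real (wt n k) * h k)"
proof -
  define M where "M = (MM n :: ('s \<Rightarrow> int) set)"
  define D where "D = (\<lambda>p. vdiff (snd p) (fst p)) ` (M \<times> M)"
  have fM: "finite M" by (simp add: M_def finite_MM)
  have fD: "finite D" using fM by (simp add: D_def)
  have vm: "vdiff (madd m k) m = k" for m k by (simp add: vdiff_def madd_def vec_eq_iff)
  have mv: "madd m (vdiff m' m) = m'" for m m' by (simp add: vdiff_def madd_def fun_eq_iff)
  have A: "(\<Sum>m'\<in>M. h (vdiff m' m)) = (\<Sum>k\<in>D. if madd m k \<in> M then h k else 0)" if m: "m \<in> M" for m
  proof -
    have inj: "inj_on (\<lambda>m'. vdiff m' m) M"
      by (rule inj_onI) (metis mv)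
    have img: "{k \<in> D. madd m k \<in> M} = (\<lambda>m'. vdiff m' m) ` M"
    proof
      show "{k \<in> D. madd m k \<in> M} \<subseteq> (\<lambda>m'. vdiff m' m) ` M"
      proof
        fix k assume k: "k \<in> {k \<in> D. madd m k \<in> M}"
        have "k = vdiff (madd m k) m" by (simp add: vm)
        with k show "k \<in> (\<lambda>m'. vdiff m' m) ` M" by blast
      qed
      show "(\<lambda>m'. vdiff m' m) ` M \<subseteq> {k \<in> D. madd m k \<in> M}"
        using m by (auto simp: D_def mv intro!: image_eqI[where x="(m, _)"])
    qed
    have "(\<Sum>k\<in>D. if madd m k \<in> M then h k else 0) = (\<Sum>k\<in>{k \<in> D. madd m k \<in> M}. h k)"
      by (rule sum.inter_filter[OF fD, symmetric])
    also have "\<dots> = (\<Sum>m'\<in>M. h (vdiff m' m))"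
      unfolding img by (simp add: sum.reindex[OF inj])
    finally show ?thesis by simp
  qed
  have "(\<Sum>m\<in>M. \<Sum>m'\<in>M. h (vdiff m' m)) = (\<Sum>m\<in>M. \<Sum>k\<in>D. if madd m k \<in> M then h k else 0)"
    by (rule sum.cong) (simp_all add: A)
  also have "\<dots> = (\<Sum>k\<in>D. \<Sum>m\<in>M. if madd m k \<in> M then h k else 0)"
    by (rule sum.swap)
  also have "\<dots> = (\<Sum>k\<in>D. of_nat (card {m \<in> M. madd m k \<in> M}) * h k)"
  proof (rule sum.cong[OF refl])
    fix k
    have "(\<Sum>m\<in>M. if madd m k \<in> M then h k else 0) = (\<Sum>m\<in>{m \<in> M. madd m k \<in> M}. h k)"
      by (rule sum.inter_filter[OF fM, symmetric])
    then show "(\<Sum>m\<in>M. if madd m k \<in> M then h k else 0) = of_nat (card {m \<in> M. madd m k \<in> M}) * h k"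
      by simp
  qed
  finally have S: "(\<Sum>m\<in>M. \<Sum>m'\<in>M. h (vdiff m' m)) = (\<Sum>k\<in>D. of_nat (card {m \<in> M. madd m k \<in> M}) * h k)" .
  have wD: "wt n k = 0" if "k \<notin> D" for k
  proof -
    have "{m \<in> M. madd m k \<in> M} = {}"
    proof (rule ccontr)
      assume "{m \<in> M. madd m k \<in> M} \<noteq> {}"
      then obtain m where "m \<in> M" "madd m k \<in> M" by blast
      then have "k \<in> D" unfolding D_def using vm[of m k]
        by (auto intro!: image_eqI[where x="(m, madd m k)"])
      with that show False by simp
    qed
    then show ?thesis unfolding wt_def by (simp only: M_def[symmetric] card.empty)
  qed
  have "(\<Sum>\<^sub>\<infinity>k\<in>UNIV. of_real (wt n k) * h k) = (\<Sum>\<^sub>\<infinity>k\<in>D. of_real (wt n k) * h k)"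
    by (rule infsum_cong_neutral) (auto simp: wD)
  also have "\<dots> = (\<Sum>k\<in>D. of_real (wt n k) * h k)"
    using fD by simp
  also have "\<dots> = of_real (1 / real (card M)) * (\<Sum>k\<in>D. of_nat (card {m \<in> M. madd m k \<in> M}) * h k)"
    by (simp add: sum_distrib_left wt_def M_def divide_inverse mult_ac)
  finally show ?thesis using S by (simp add: M_def)
qed

lemma weighted_limit:
  fixes a :: "'k \<Rightarrow> complex" and w :: "nat \<Rightarrow> 'k \<Rightarrow> real"
  assumes sa: "(\<lambda>k. norm (a k)) summable_on UNIV"
    and w0: "\<And>n k. 0 \<le> w n k" and w1: "\<And>n k. w n k \<le> 1"
    and wl: "\<And>k. (\<lambda>n. w n k) \<longlonglongrightarrow> 1"
  shows "(\<lambda>n. \<Sum>\<^sub>\<infinity>k. of_real (w n k) * a k) \<longlonglongrightarrow> (\<Sum>\<^sub>\<infinity>k. a k)"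
proof (rule LIMSEQ_I)
  fix r :: real assume r: "r > 0"
  define A where "A = (\<Sum>\<^sub>\<infinity>k. norm (a k))"
  have asum: "a summable_on UNIV" using sa by (rule abs_summable_summable)
  obtain F where F: "finite F" "dist (sum (\<lambda>k. norm (a k)) F) A \<le> r / 3"
    using infsum_finite_approximation[OF sa, of "r/3"] r by (auto simp: A_def)
  have sF: "(\<lambda>k. norm (a k)) summable_on (UNIV - F)"
    using sa by (rule summable_on_subset) auto
  have "A = (\<Sum>\<^sub>\<infinity>k\<in>F \<union> (UNIV - F). norm (a k))" by (simp add: A_def)
  also have "\<dots> = (\<Sum>\<^sub>\<infinity>k\<in>F. norm (a k)) + (\<Sum>\<^sub>\<infinity>k\<in>UNIV - F. norm (a k))"
    by (rule infsum_Un_disjoint) (use F sF in auto)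
  finally have tail: "(\<Sum>\<^sub>\<infinity>k\<in>UNIV - F. norm (a k)) \<le> r / 3"
    using F by (simp add: dist_real_def)
  have "(\<lambda>n. \<Sum>k\<in>F. (1 - w n k) * norm (a k)) \<longlonglongrightarrow> (\<Sum>k\<in>F. (1 - 1) * norm (a k))"
    by (intro tendsto_sum tendsto_mult tendsto_diff tendsto_const wl)
  then have "eventually (\<lambda>n. (\<Sum>k\<in>F. (1 - w n k) * norm (a k)) < r / 3) sequentially"
    using r by (intro order_tendstoD(2)) auto
  then obtain no where no: "\<And>n. n \<ge> no \<Longrightarrow> (\<Sum>k\<in>F. (1 - w n k) * norm (a k)) < r / 3"
    by (auto simp: eventually_sequentially)
  show "\<exists>no. \<forall>n\<ge>no. norm ((\<Sum>\<^sub>\<infinity>k. of_real (w n k) * a k) - (\<Sum>\<^sub>\<infinity>k. a k)) < r"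
  proof (intro exI allI impI)
    fix n assume n: "no \<le> n"
    define g where "g = (\<lambda>k. (1 - w n k) * norm (a k))"
    have g0: "g k \<ge> 0" for k using w1[of n k] by (simp add: g_def)
    have gle: "g k \<le> norm (a k)" for k using w0[of n k] w1[of n k]
      by (simp add: g_def mult_left_le_one_le)
    have gs: "g summable_on UNIV"
      by (rule summable_on_comparison_test[OF sa]) (use g0 gle in auto)
    have gsF: "g summable_on (UNIV - F)"
      using gs by (rule summable_on_subset) auto
    have was: "(\<lambda>k. of_real (w n k) * a k) summable_on UNIV"
    proof (rule abs_summable_summable, rule summable_on_comparison_test[OF sa])
      fix k show "norm (of_real (w n k) * a k) \<ge> 0" by simp
      show "norm (of_real (w n k) * a k) \<le> norm (a k)"
        using w0[of n k] w1[of n k] by (simp add: norm_mult mult_left_le_one_le)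
    qed
    have hs: "((\<lambda>k. of_real (w n k) * a k + - a k) has_sum ((\<Sum>\<^sub>\<infinity>k. of_real (w n k) * a k) + - (\<Sum>\<^sub>\<infinity>k. a k))) UNIV"
      by (intro has_sum_add has_sum_infsum was) (simp add: has_sum_uminus asum)
    have "norm ((\<Sum>\<^sub>\<infinity>k. of_real (w n k) * a k) + - (\<Sum>\<^sub>\<infinity>k. a k)) \<le> (\<Sum>\<^sub>\<infinity>k. g k)"
    proof (rule norm_infsum_le[OF hs has_sum_infsum[OF gs]])
      fix k
      have "of_real (w n k) * a k + - a k = - (of_real (1 - w n k) * a k)"
        by (simp add: algebra_simps)
      moreover have "norm (of_real (1 - w n k) :: complex) = 1 - w n k"
        using w1[of n k] by (simp only: norm_of_real)
      ultimately show "norm (of_real (w n k) * a k + - a k) \<le> g k"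
        by (simp only: norm_minus_cancel norm_mult g_def)
    qed
    also have "(\<Sum>\<^sub>\<infinity>k. g k) = (\<Sum>\<^sub>\<infinity>k\<in>F \<union> (UNIV - F). g k)" by simp
    also have "\<dots> = (\<Sum>\<^sub>\<infinity>k\<in>F. g k) + (\<Sum>\<^sub>\<infinity>k\<in>UNIV - F. g k)"
      by (rule infsum_Un_disjoint) (use F gsF in auto)
    also have "(\<Sum>\<^sub>\<infinity>k\<in>F. g k) = (\<Sum>k\<in>F. g k)" using F by simp
    also have "(\<Sum>\<^sub>\<infinity>k\<in>UNIV - F. g k) \<le> (\<Sum>\<^sub>\<infinity>k\<in>UNIV - F. norm (a k))"
      by (rule infsum_mono[OF gsF sF gle])
    finally have "norm ((\<Sum>\<^sub>\<infinity>k. of_real (w n k) * a k) + - (\<Sum>\<^sub>\<infinity>k. a k)) \<le> (\<Sum>k\<in>F. g k) + r / 3"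
      using tail by linarith
    moreover have "(\<Sum>k\<in>F. g k) < r / 3" using no[OF n] by (simp add: g_def)
    ultimately have "norm ((\<Sum>\<^sub>\<infinity>k. of_real (w n k) * a k) + - (\<Sum>\<^sub>\<infinity>k. a k)) < r"
      using r by linarith
    then show "norm ((\<Sum>\<^sub>\<infinity>k. of_real (w n k) * a k) - (\<Sum>\<^sub>\<infinity>k. a k)) < r"
      by simp
  qed
qed

lemma lp_bound:
  fixes h :: "real^'s::finite" and p :: ereal
  assumes p: "1 \<le> p" and hb: "\<And>j. \<bar>h $ j\<bar> \<le> 1 / real L" and L: "L \<ge> 1" and \<alpha>: "0 < \<alpha>"
  shows "lp_norm p h powr \<alpha> \<le> dim_factor \<alpha> p TYPE('s) / real L powr \<alpha>"
proof (cases "p = \<infinity>")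
  case True
  have "lp_norm p h = Max (range (\<lambda>j. \<bar>h $ j\<bar>))" using True by (simp add: lp_norm_def)
  also have "\<dots> \<le> 1 / real L" using hb by (subst Max_le_iff) auto
  finally have le: "lp_norm p h \<le> 1 / real L" .
  have nn: "0 \<le> lp_norm p h"
  proof -
    have "\<bar>h $ undefined\<bar> \<le> Max (range (\<lambda>j. \<bar>h $ j\<bar>))" by (rule Max_ge) auto
    moreover have "0 \<le> \<bar>h $ undefined\<bar>" by simp
    ultimately have "0 \<le> Max (range (\<lambda>j. \<bar>h $ j\<bar>))" by linarith
    then show ?thesis using True by (simp add: lp_norm_def)
  qed
  have "lp_norm p h powr \<alpha> \<le> (1 / real L) powr \<alpha>"
    using le nn \<alpha> by (intro powr_mono2) auto
  also have "\<dots> = dim_factor \<alpha> p TYPE('s) / real L powr \<alpha>"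
    using True by (simp add: dim_factor_def powr_divide)
  finally show ?thesis .
next
  case False
  then obtain P where pP: "p = ereal P" using p by (cases p) auto
  have P1: "P \<ge> 1" using p pP by simp
  define s where "s = real CARD('s)"
  have s0: "s \<ge> 0" by (simp add: s_def)
  have Lp: "real L > 0" using L by simp
  have "(\<Sum>j\<in>UNIV. \<bar>h $ j\<bar> powr P) \<le> (\<Sum>j\<in>(UNIV::'s set). (1 / real L) powr P)"
    using hb P1 by (intro sum_mono powr_mono2) auto
  also have "\<dots> = s * (1 / real L) powr P" by (simp add: s_def)
  finally have S: "(\<Sum>j\<in>UNIV. \<bar>h $ j\<bar> powr P) \<le> s * (1 / real L) powr P" .
  have "lp_norm p h = (\<Sum>j\<in>UNIV. \<bar>h $ j\<bar> powr P) powr (1 / P)"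
    using pP by (simp add: lp_norm_def)
  also have "\<dots> \<le> (s * (1 / real L) powr P) powr (1 / P)"
    using S P1 by (intro powr_mono2) (auto intro: sum_nonneg)
  also have "\<dots> = s powr (1 / P) * (1 / real L)"
    using P1 s0 Lp by (simp add: powr_mult powr_powr)
  finally have le: "lp_norm p h \<le> s powr (1 / P) * (1 / real L)" .
  have nn: "0 \<le> lp_norm p h" using pP by (simp add: lp_norm_def)
  have "lp_norm p h powr \<alpha> \<le> (s powr (1 / P) * (1 / real L)) powr \<alpha>"
    using le nn \<alpha> by (intro powr_mono2) auto
  also have "\<dots> = s powr (\<alpha> / P) / real L powr \<alpha>"
    using s0 Lp by (simp add: powr_mult powr_powr powr_divide)
  also have "\<dots> = dim_factor \<alpha> p TYPE('s) / real L powr \<alpha>"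
    using pP by (simp add: dim_factor_def s_def)
  finally show ?thesis .
qed

lemma lp_pos:
  fixes h :: "real^'s::finite" and p :: ereal
  assumes p: "1 \<le> p" and h: "h \<noteq> 0"
  shows "lp_norm p h > 0"
proof -
  obtain j where j: "h $ j \<noteq> 0" using h by (auto simp: vec_eq_iff)
  show ?thesis
  proof (cases "p = \<infinity>")
    case True
    have "\<bar>h $ j\<bar> \<le> Max (range (\<lambda>j. \<bar>h $ j\<bar>))" by (rule Max_ge) auto
    moreover have "0 < \<bar>h $ j\<bar>" using j by simp
    ultimately have "0 < Max (range (\<lambda>j. \<bar>h $ j\<bar>))" by linarith
    then show ?thesis using True by (simp add: lp_norm_def)
  next
    case False
    then obtain P where pP: "p = ereal P" using p by (cases p) auto
    have "\<bar>h $ j\<bar> powr P \<le> (\<Sum>j\<in>UNIV. \<bar>h $ j\<bar> powr P)"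
      by (rule member_le_sum) auto
    moreover have "\<bar>h $ j\<bar> powr P > 0" using j by simp
    ultimately have "(\<Sum>j\<in>UNIV. \<bar>h $ j\<bar> powr P) \<noteq> 0" by linarith
    then show ?thesis using pP by (simp add: lp_norm_def)
  qed
qed

lemma holder_seminorm_nonneg:
  fixes f :: "real^'s::finite \<Rightarrow> real"
  assumes bdd: "bdd_above (holder_quotients \<alpha> p f)"
  shows "holder_seminorm \<alpha> p f \<ge> 0"
proof -
  define x0 :: "real^'s" where "x0 = 0"
  define h0 :: "real^'s" where "h0 = (\<chi> j. 1/2)"
  have "\<bar>f (x0 + h0) - f x0\<bar> / (lp_norm p h0) powr \<alpha> \<in> holder_quotients \<alpha> p f"
    unfolding holder_quotients_def
    by (rule CollectI, rule exI[of _ x0], rule exI[of _ h0])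
       (auto simp: x0_def h0_def halfopen_cube_def vec_eq_iff)
  then have "\<bar>f (x0 + h0) - f x0\<bar> / (lp_norm p h0) powr \<alpha> \<le> holder_seminorm \<alpha> p f"
    unfolding holder_seminorm_def using bdd by (rule cSup_upper)
  moreover have "0 \<le> \<bar>f (x0 + h0) - f x0\<bar> / (lp_norm p h0) powr \<alpha>" by simp
  ultimately show ?thesis by linarith
qed

lemma holder_bound:
  fixes f :: "real^'s::finite \<Rightarrow> real"
  assumes \<alpha>: "0 < \<alpha>" and p: "1 \<le> p" and bdd: "bdd_above (holder_quotients \<alpha> p f)"
    and L: "L \<ge> 1" and a: "a \<in> grid L" and y: "y \<in> box 0 (gdel L)" and z: "z \<in> box 0 (gdel L)"
  shows "\<bar>f (gpt L a + y) - f (gpt L a + z)\<bar> \<le> dim_factor \<alpha> p TYPE('s) / real L powr \<alpha> * holder_seminorm \<alpha> p f"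
proof -
  define H where "H = holder_seminorm \<alpha> p f"
  have H0: "H \<ge> 0" using holder_seminorm_nonneg[OF bdd] by (simp add: H_def)
  have D0: "dim_factor \<alpha> p TYPE('s) / real L powr \<alpha> \<ge> 0" by (simp add: dim_factor_def)
  show ?thesis
  proof (cases "y = z")
    case True
    have "0 \<le> dim_factor \<alpha> p TYPE('s) / real L powr \<alpha> * H" using D0 H0 by (rule mult_nonneg_nonneg)
    then show ?thesis using True by (simp add: H_def)
  next
    case False
    define x where "x = gpt L a + z"
    define h where "h = y - z"
    have Lp: "real L > 0" using L by simp
    have aj: "real (a j) + 1 \<le> real L" for j
    proof -
      have "a j + 1 \<le> L" using a by (auto simp: grid_iff Suc_le_eq)
      then show ?thesis by linarith
    qed
    have incube: "gpt L a + w \<in> halfopen_cube" if w: "w \<in> box 0 (gdel L)" for w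
    proof -
      have "0 < w $ j \<and> w $ j < 1 / real L" for j using w by (simp add: mem_box_cart gdel_def)
      moreover have "real (a j) / real L + 1 / real L \<le> 1" for j
        using aj[of j] Lp by (simp add: add_divide_distrib[symmetric] divide_le_eq_1)
      moreover have "0 \<le> real (a j) / real L" for j by simp
      moreover have c: "(gpt L a + w) $ j = real (a j) / real L + w $ j" for j by (simp add: gpt_def)
      ultimately have "0 \<le> (gpt L a + w) $ j \<and> (gpt L a + w) $ j < 1" for j
        by (metis add_nonneg_nonneg add_strict_left_mono less_imp_le order_less_le_trans)
      then show ?thesis by (simp add: halfopen_cube_def)
    qed
    have xh: "x + h = gpt L a + y" by (simp add: x_def h_def)
    have h0: "h \<noteq> 0" using False by (simp add: h_def)
    have q: "\<bar>f (x + h) - f x\<bar> / (lp_norm p h) powr \<alpha> \<in> holder_quotients \<alpha> p f"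
      unfolding holder_quotients_def
      by (rule CollectI, rule exI[of _ x], rule exI[of _ h]) (use h0 incube[OF z] incube[OF y] xh in \<open>simp add: x_def add.assoc\<close>)
    have qle: "\<bar>f (x + h) - f x\<bar> / (lp_norm p h) powr \<alpha> \<le> H"
      unfolding H_def holder_seminorm_def by (rule cSup_upper[OF q bdd])
    have lpp: "(lp_norm p h) powr \<alpha> > 0" using lp_pos[OF p h0] by simp
    have hb: "\<bar>h $ j\<bar> \<le> 1 / real L" for j
    proof -
      have "0 < y $ j" "y $ j < 1 / real L" "0 < z $ j" "z $ j < 1 / real L"
        using y z by (auto simp: mem_box_cart gdel_def)
      then show ?thesis by (simp add: h_def)
    qed
    have "\<bar>f (x + h) - f x\<bar> \<le> H * (lp_norm p h) powr \<alpha>"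
      using qle lpp by (simp add: divide_le_eq)
    also have "\<dots> \<le> H * (dim_factor \<alpha> p TYPE('s) / real L powr \<alpha>)"
      by (rule mult_left_mono[OF lp_bound[OF p hb L \<alpha>] H0])
    finally show ?thesis by (simp add: x_def h_def H_def mult.commute algebra_simps)
  qed
qed

theorem mainTheorem1:
  fixes f :: "real ^ 's \<Rightarrow> real" and \<alpha> :: real and p :: ereal and L :: nat
  assumes "0 < \<alpha>" "\<alpha> \<le> 1" "1 \<le> p"
    and "f \<in> K_space \<alpha> p"
    and "L \<ge> 1"
  shows "norm (\<Sum>\<^sub>\<infinity>k\<in>UNIV - {0}. fourier_coeff f (\<chi> j. int L * k $ j))
           \<le> dim_factor \<alpha> p TYPE('s) / real L powr \<alpha> * holder_seminorm \<alpha> p f"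
proof -
  note \<alpha> = assms(1) and p = assms(3) and L = assms(5)
  have sq: "square_integrable_on_cube f"
    and sm: "(\<lambda>k. norm (fourier_coeff f k)) summable_on UNIV"
    and bdd: "bdd_above (holder_quotients \<alpha> p f)"
    using assms(4) by (auto simp: K_space_def)
  have fa: "f absolutely_integrable_on cbox 0 1" by (rule f_abs_int[OF sq])
  have fi: "f integrable_on cbox 0 1" using fa set_lebesgue_integral_eq_integral(1) by blast
  define C where "C = dim_factor \<alpha> p TYPE('s) / real L powr \<alpha> * holder_seminorm \<alpha> p f"
  define c where "c = fourier_coeff f"
  define hh where "hh = (\<lambda>k::int^'s. c (\<chi> j. int L * k $ j))"
  define T where "T = (\<lambda>n. \<Sum>\<^sub>\<infinity>k. of_real (wt n k) * hh k)"
  have c0: "c 0 = complex_of_real (integral (cbox 0 1) f)"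
  proof -
    have "c 0 = integral (cbox 0 1) (\<lambda>x::real^'s. complex_of_real (f x))"
      by (simp add: c_def fourier_coeff_E)
    also have "\<dots> = complex_of_real (integral (cbox 0 1) f)"
      using integral_linear[OF fi bounded_linear_of_real[where 'a=complex]] unfolding o_def .
    finally show ?thesis .
  qed
  have bound: "norm (T n - c 0) \<le> C" for n
  proof -
    have g: "\<bar>integral (cbox 0 1) (\<lambda>x. f x * Kr L n x) - integral (cbox 0 1) f\<bar> \<le> C"
      unfolding C_def
    proof (rule geom_estimate[OF L fi fK_int[OF fa] Kr_cont Kr_nonneg Kr_per[OF L] _ Kr_int[OF L]])
      fix a :: "'s \<Rightarrow> nat" and y z :: "real^'s" assume "a \<in> grid L" "y \<in> box 0 (gdel L)" "z \<in> box 0 (gdel L)"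
      then show "\<bar>f (gpt L a + y) - f (gpt L a + z)\<bar> \<le> dim_factor \<alpha> p TYPE('s) / real L powr \<alpha> * holder_seminorm \<alpha> p f"
        by (rule holder_bound[OF \<alpha> p bdd L])
    qed
    have vv: "vL L m' - vL L m = (\<chi> j. int L * vdiff m' m $ j)" for m m' :: "'s \<Rightarrow> int"
      by (simp add: vL_def vdiff_def vec_eq_iff right_diff_distrib)
    have "T n = of_real (1 / real (card (MM n :: ('s \<Rightarrow> int) set))) *
           (\<Sum>m\<in>(MM n :: ('s \<Rightarrow> int) set). \<Sum>m'\<in>MM n. hh (vdiff m' m))"
      unfolding T_def by (rule double_sum_wt[symmetric])
    also have "\<dots> = complex_of_real (integral (cbox 0 1) (\<lambda>x. f x * Kr L n x))"
      unfolding fK_identity[OF fa] by (simp add: hh_def c_def vv)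
    finally have Tn: "T n = complex_of_real (integral (cbox 0 1) (\<lambda>x. f x * Kr L n x))" .
    show ?thesis unfolding Tn c0
      using g by (simp only: of_real_diff[symmetric] norm_of_real real_norm_def)
  qed
  have inj: "inj (\<lambda>k::int^'s. (\<chi> j. int L * k $ j))"
    using L by (auto intro!: injI simp: vec_eq_iff)
  have shh: "(\<lambda>k. norm (hh k)) summable_on UNIV"
  proof -
    have "(\<lambda>k. norm (c k)) summable_on range (\<lambda>k::int^'s. (\<chi> j. int L * k $ j))"
      using sm unfolding c_def by (rule summable_on_subset) auto
    then show ?thesis
      unfolding hh_def using summable_on_reindex[OF inj, of "\<lambda>k. norm (c k)"] by (simp add: o_def)
  qed
  have lim: "T \<longlonglongrightarrow> (\<Sum>\<^sub>\<infinity>k. hh k)"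
    unfolding T_def by (rule weighted_limit[OF shh wt_nonneg wt_le1 wt_lim])
  have le: "norm ((\<Sum>\<^sub>\<infinity>k. hh k) - c 0) \<le> C"
    by (rule LIMSEQ_le_const2[OF tendsto_norm[OF tendsto_diff[OF lim tendsto_const]]]) (use bound in auto)
  have hs: "hh summable_on UNIV" using shh by (rule abs_summable_summable)
  have "(\<Sum>\<^sub>\<infinity>k. hh k) = (\<Sum>\<^sub>\<infinity>k\<in>{0} \<union> (UNIV - {0}). hh k)" by simp
  also have "\<dots> = (\<Sum>\<^sub>\<infinity>k\<in>{0}. hh k) + (\<Sum>\<^sub>\<infinity>k\<in>UNIV - {0}. hh k)"
    by (rule infsum_Un_disjoint) (use hs summable_on_subset in auto)
  also have "(\<Sum>\<^sub>\<infinity>k\<in>{0}. hh k) = c 0"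
  proof -
    have z: "(\<chi> j. (0::int)) = (0::int^'s)" by (simp add: vec_eq_iff)
    show ?thesis by (simp add: hh_def z)
  qed
  finally have "(\<Sum>\<^sub>\<infinity>k\<in>UNIV - {0}. hh k) = (\<Sum>\<^sub>\<infinity>k. hh k) - c 0" by simp
  then show ?thesis using le by (simp add: hh_def c_def C_def)
qed

end
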